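(* For any sequence of groups $(G_n)_{n\in\mathbb N}$, the archipelago group $\mathcal A(G_n)$ has no infinite cyclic quotient; equivalently, $\mathrm{Hom}(\mathcal A(G_n),\mathbb Z)$ is trivial.
   Context: For a sequence of groups $(G_n)_{n\in\mathbb N}$, an infinite word is a map $w:L\to\bigsqcup_n (G_n\setminus\{1\})$ from a countable linearly ordered set $L$ such that $w^{-1}(G_n)$ is finite for every $n$. Two infinite words are equivalent if for every $m$ their restrictions to the letters from $G_1,\dots,G_m$ represent the same element of $G_1*\cdots*G_m$. The topologist's product $\circledast_n G_n$ is the group of equivalence classes, with multiplication induced by concatenation and inversion by reversing the order and inverting each letter. The free product $*_n G_n$ is the subgroup of classes of finite words. The archipelago group is $\mathcal A(G_n):=\circledast_n G_n/\langle\langle *_n G_n\rangle\rangle$ (quotient by the normal closure). *)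

theory Defs
  imports "HOL-Algebra.Algebra"
begin

text \<open>An infinite word over a countable linear order L is represented as a partial map
  from the rationals (every countable linear order embeds into Q) to letters;
  its domain is L.\<close>

type_synonym 'a letter = "nat \<times> 'a"
type_synonym 'a word = "rat \<Rightarrow> 'a letter option"

definition is_word :: "(nat \<Rightarrow> 'a monoid) \<Rightarrow> 'a word \<Rightarrow> bool" where
  "is_word G w \<longleftrightarrow>
     (\<forall>q n g. w q = Some (n, g) \<longrightarrow> g \<in> carrier (G n) \<and> g \<noteq> \<one>\<^bsub>G n\<^esub>) \<and>
     (\<forall>n. finite {q. \<exists>g. w q = Some (n, g)})"

definition restr :: "'a word \<Rightarrow> nat \<Rightarrow> 'a letter list" where
  "restr w m = map (\<lambda>q. the (w q))
      (sorted_list_of_set {q. \<exists>n g. w q = Some (n, g) \<and> n < m})"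

text \<open>Free product of the G_n: finite words modulo the elementary moves
  (merging two adjacent letters of the same group, deleting an identity letter).\<close>
inductive fp_step :: "(nat \<Rightarrow> 'a monoid) \<Rightarrow> 'a letter list \<Rightarrow> 'a letter list \<Rightarrow> bool"
  for G where
  merge: "a \<in> carrier (G n) \<Longrightarrow> b \<in> carrier (G n) \<Longrightarrow>
     fp_step G (xs @ [(n, a), (n, b)] @ ys) (xs @ [(n, a \<otimes>\<^bsub>G n\<^esub> b)] @ ys)"
| delete: "fp_step G (xs @ [(n, \<one>\<^bsub>G n\<^esub>)] @ ys) (xs @ ys)"

definition fp_eq :: "(nat \<Rightarrow> 'a monoid) \<Rightarrow> 'a letter list \<Rightarrow> 'a letter list \<Rightarrow> bool" where
  "fp_eq G = equivclp (fp_step G)"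

definition word_eq :: "(nat \<Rightarrow> 'a monoid) \<Rightarrow> 'a word \<Rightarrow> 'a word \<Rightarrow> bool" where
  "word_eq G w v \<longleftrightarrow> (\<forall>m. fp_eq G (restr w m) (restr v m))"

text \<open>Order isomorphism Q \<rightarrow> Q \<inter> (-1,1) and its inverse, used for concatenation.\<close>
definition squash_inv :: "rat \<Rightarrow> rat" where
  "squash_inv y = y / (1 - \<bar>y\<bar>)"

definition word_concat :: "'a word \<Rightarrow> 'a word \<Rightarrow> 'a word" where
  "word_concat w v p =
     (if -2 < p \<and> p < 0 then w (squash_inv (p + 1))
      else if 0 < p \<and> p < 2 then v (squash_inv (p - 1))
      else None)"

definition word_class :: "(nat \<Rightarrow> 'a monoid) \<Rightarrow> 'a word \<Rightarrow> 'a word set" where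
  "word_class G w = {v. is_word G v \<and> word_eq G v w}"

definition tp_mult :: "(nat \<Rightarrow> 'a monoid) \<Rightarrow> 'a word set \<Rightarrow> 'a word set \<Rightarrow> 'a word set" where
  "tp_mult G A B = {u. is_word G u \<and> (\<exists>x\<in>A. \<exists>y\<in>B. word_eq G u (word_concat x y))}"

definition topologists_product :: "(nat \<Rightarrow> 'a monoid) \<Rightarrow> 'a word set monoid" where
  "topologists_product G =
     \<lparr> carrier = {word_class G w | w. is_word G w},
       monoid.mult = tp_mult G,
       one = word_class G (\<lambda>_. None) \<rparr>"

definition free_product_sub :: "(nat \<Rightarrow> 'a monoid) \<Rightarrow> 'a word set set" where
  "free_product_sub G = {word_class G w | w. is_word G w \<and> finite (dom w)}"

definition normal_closure :: "('b, 'c) monoid_scheme \<Rightarrow> 'b set \<Rightarrow> 'b set" where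
  "normal_closure H S =
     generate H (\<Union>x\<in>carrier H. \<Union>s\<in>S. {x \<otimes>\<^bsub>H\<^esub> s \<otimes>\<^bsub>H\<^esub> inv\<^bsub>H\<^esub> x})"

definition archipelago :: "(nat \<Rightarrow> 'a monoid) \<Rightarrow> 'a word set set monoid" where
  "archipelago G = topologists_product G Mod
                     normal_closure (topologists_product G) (free_product_sub G)"

end

theory Submission
  imports Defs
begin

definition sq :: "rat \<Rightarrow> rat" where "sq x = x / (1 + \<bar>x\<bar>)"

lemma sq_bound: "\<bar>sq x\<bar> < 1"
proof -
  have d: "0 < 1 + \<bar>x\<bar>" using abs_ge_zero[of x] by linarith
  have "\<bar>sq x\<bar> = \<bar>x\<bar> / \<bar>1 + \<bar>x\<bar>\<bar>" unfolding sq_def by (rule abs_divide)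
  also have "\<bar>1 + \<bar>x\<bar>\<bar> = 1 + \<bar>x\<bar>" using d by (rule abs_of_pos)
  also have "\<bar>x\<bar> / (1 + \<bar>x\<bar>) < 1" using d by (simp only: divide_less_eq_1_pos)
  finally show ?thesis .
qed

lemma sq_inv_sq: "squash_inv (sq x) = x"
proof (cases "0 \<le> x")
  case True
  have d: "0 < 1 + x" using True by linarith
  have s: "sq x = x / (1 + x)" using True by (simp add: sq_def)
  have "0 \<le> sq x" using True d s by simp
  then have "squash_inv (sq x) = sq x / (1 - sq x)" by (simp add: squash_inv_def)
  also have "1 - sq x = 1 / (1 + x)" using d unfolding s by (simp add: diff_divide_eq_iff)
  also have "sq x / (1 / (1 + x)) = x" using d unfolding s by simp
  finally show ?thesis .
next
  case False
  have d: "0 < 1 - x" using False by linarith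
  have s: "sq x = x / (1 - x)" using False by (simp add: sq_def)
  have "sq x < 0" using False d s by (simp add: divide_neg_pos)
  then have "squash_inv (sq x) = sq x / (1 + sq x)" by (simp add: squash_inv_def)
  also have "1 + sq x = 1 / (1 - x)" using d unfolding s by (simp add: add_divide_eq_iff)
  also have "sq x / (1 / (1 - x)) = x" using d unfolding s by simp
  finally show ?thesis .
qed

lemma sq_sq_inv: "\<bar>y\<bar> < 1 \<Longrightarrow> sq (squash_inv y) = y"
proof (cases "0 \<le> y")
  case True
  assume y: "\<bar>y\<bar> < 1"
  have d: "0 < 1 - y" using y True by linarith
  have e: "squash_inv y = y / (1 - y)" using True by (simp add: squash_inv_def)
  have "0 \<le> squash_inv y" using True d e by simp
  then have "sq (squash_inv y) = squash_inv y / (1 + squash_inv y)" by (simp add: sq_def)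
  then have "sq (squash_inv y) = (y / (1 - y)) / (1 + y / (1 - y))" by (simp only: e)
  also have "1 + y / (1 - y) = 1 / (1 - y)" using d by (simp add: add_divide_eq_iff)
  finally show ?thesis using d by simp
next
  case False
  assume y: "\<bar>y\<bar> < 1"
  have d: "0 < 1 + y" using y False by linarith
  have e: "squash_inv y = y / (1 + y)" using False by (simp add: squash_inv_def)
  have "squash_inv y < 0" using False d e by (simp add: divide_neg_pos)
  then have "sq (squash_inv y) = squash_inv y / (1 - squash_inv y)" by (simp add: sq_def)
  then have "sq (squash_inv y) = (y / (1 + y)) / (1 - y / (1 + y))" by (simp only: e)
  also have "1 - y / (1 + y) = 1 / (1 + y)" using d by (simp add: diff_divide_eq_iff)
  finally show ?thesis using d by simp
qed

lemma sq_nonneg_form: "0 \<le> x \<Longrightarrow> sq x = 1 - 1 / (1 + x)"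
proof -
  assume x: "0 \<le> x"
  then have d: "1 + x \<noteq> 0" by linarith
  have "sq x = x / (1 + x)" using x by (simp add: sq_def)
  also have "\<dots> = 1 - 1 / (1 + x)" using d by (simp add: diff_divide_eq_iff)
  finally show ?thesis .
qed

lemma sq_neg_form: "x < 0 \<Longrightarrow> sq x = 1 / (1 - x) - 1"
proof -
  assume x: "x < 0"
  then have d: "1 - x \<noteq> 0" by linarith
  have "sq x = x / (1 - x)" using x by (simp add: sq_def)
  also have "\<dots> = 1 / (1 - x) - 1" using d by (simp add: divide_diff_eq_iff)
  finally show ?thesis .
qed

lemma sq_mono: "x < y \<Longrightarrow> sq x < sq y"
proof -
  assume xy: "x < y"
  consider "0 \<le> x" | "x < 0 \<and> 0 \<le> y" | "y < 0" by linarith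
  then show ?thesis
  proof cases
    case 1
    have "1 / (1 + y) < 1 / (1 + x)"
      by (rule divide_strict_left_mono) (use 1 xy in auto)
    then show ?thesis using 1 xy by (simp add: sq_nonneg_form)
  next
    case 2
    have "sq x < 0" using 2 by (simp add: sq_def divide_neg_pos)
    moreover have "0 \<le> sq y" using 2 by (simp add: sq_def)
    ultimately show ?thesis by simp
  next
    case 3
    have "1 / (1 - x) < 1 / (1 - y)"
      by (rule divide_strict_left_mono) (use 3 xy in auto)
    then show ?thesis using 3 xy by (simp add: sq_neg_form)
  qed
qed

lemma concat_L: "word_concat w v (sq q - 1) = w q"
proof -
  have "-2 < sq q - 1 \<and> sq q - 1 < 0" using sq_bound[of q] by (simp add: abs_less_iff)
  then show ?thesis by (simp add: word_concat_def sq_inv_sq)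
qed

lemma concat_R: "word_concat w v (sq q + 1) = v q"
proof -
  have "\<not> (-2 < sq q + 1 \<and> sq q + 1 < 0)" "0 < sq q + 1 \<and> sq q + 1 < 2" using sq_bound[of q] by (simp_all add: abs_less_iff)
  then show ?thesis by (simp add: word_concat_def sq_inv_sq)
qed

lemma concat_cases:
  "(\<exists>q. p = sq q - 1 \<and> (\<forall>w v. word_concat w v p = w q)) \<or>
   (\<exists>q. p = sq q + 1 \<and> (\<forall>w v. word_concat w v p = v q)) \<or>
   (\<forall>w v. word_concat w v p = None)"
proof -
  consider "-2 < p \<and> p < 0" | "0 < p \<and> p < 2" | "\<not> (-2 < p \<and> p < 0) \<and> \<not> (0 < p \<and> p < 2)" by blast
  then show ?thesis
  proof cases
    case 1
    then have "\<bar>p + 1\<bar> < 1" by auto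
    then have "p = sq (squash_inv (p+1)) - 1" by (simp add: sq_sq_inv)
    then show ?thesis using 1 by (auto simp: word_concat_def)
  next
    case 2
    then have "\<bar>p - 1\<bar> < 1" by auto
    then have "p = sq (squash_inv (p - 1)) + 1" by (simp add: sq_sq_inv)
    then show ?thesis using 2 by (auto simp: word_concat_def)
  next
    case 3 then show ?thesis by (auto simp: word_concat_def)
  qed
qed


definition supp :: "'a word \<Rightarrow> nat \<Rightarrow> rat set" where
  "supp w m = {q. \<exists>n g. w q = Some (n, g) \<and> n < m}"

lemma restr_supp: "restr w m = map (\<lambda>q. the (w q)) (sorted_list_of_set (supp w m))"
  by (simp add: restr_def supp_def)

lemma sl_eq: "finite A \<Longrightarrow> sorted_wrt (<) l \<Longrightarrow> set l = A \<Longrightarrow> sorted_list_of_set A = l"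
proof -
  assume a: "finite A" "sorted_wrt (<) l" "set l = A"
  then have "distinct l" by (simp add: strict_sorted_iff)
  then have "length l = card A" using a(3) distinct_card by fastforce
  then show ?thesis using a sorted_list_of_set_unique[of A l] by blast
qed

lemma sl_image:
  assumes "finite A" "\<And>x y. x \<in> A \<Longrightarrow> y \<in> A \<Longrightarrow> x < y \<Longrightarrow> f x < (f y :: 'b::linorder)"
  shows "sorted_list_of_set (f ` A) = map f (sorted_list_of_set (A::'c::linorder set))"
proof (rule sl_eq)
  show "finite (f ` A)" using assms by simp
  have "sorted_wrt (<) (sorted_list_of_set A)" by (rule strict_sorted_list_of_set)
  then show "sorted_wrt (<) (map f (sorted_list_of_set A))"
    unfolding sorted_wrt_map
    by (rule sorted_wrt_mono_rel[rotated]) (use assms in auto)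
  show "set (map f (sorted_list_of_set A)) = f ` A" using assms by simp
qed

lemma sl_union:
  assumes "finite A" "finite B" "\<And>a b. a \<in> A \<Longrightarrow> b \<in> B \<Longrightarrow> a < (b::'b::linorder)"
  shows "sorted_list_of_set (A \<union> B) = sorted_list_of_set A @ sorted_list_of_set B"
  by (rule sl_eq) (use assms in \<open>auto simp: sorted_wrt_append\<close>)

lemma sl_neg:
  assumes "finite (A :: rat set)"
  shows "sorted_list_of_set (uminus ` A) = rev (map uminus (sorted_list_of_set A))"
proof (rule sl_eq)
  show "finite (uminus ` A)" using assms by simp
  have "sorted_wrt (<) (sorted_list_of_set A)" by (rule strict_sorted_list_of_set)
  then show "sorted_wrt (<) (rev (map uminus (sorted_list_of_set A)))"
    unfolding sorted_wrt_rev sorted_wrt_map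
    by (rule sorted_wrt_mono_rel[rotated]) auto
  show "set (rev (map uminus (sorted_list_of_set A))) = uminus ` A" using assms by simp
qed

lemma finite_supp: "is_word G w \<Longrightarrow> finite (supp w m)"
proof -
  assume w: "is_word G w"
  have "supp w m \<subseteq> (\<Union>n<m. {q. \<exists>g. w q = Some (n, g)})" by (auto simp: supp_def)
  moreover have "finite (\<Union>n<m. {q. \<exists>g. w q = Some (n, g)})"
    using w unfolding is_word_def by auto
  ultimately show ?thesis by (rule finite_subset)
qed

lemma concat_some:
  assumes "word_concat w v p = Some x"
  shows "(\<exists>q. p = sq q - 1 \<and> w q = Some x) \<or> (\<exists>q. p = sq q + 1 \<and> v q = Some x)"
proof (cases "-2 < p \<and> p < 0")
  case True
  then have "\<bar>p + 1\<bar> < 1" by (simp add: abs_less_iff)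
  then have "p = sq (squash_inv (p+1)) - 1" by (simp add: sq_sq_inv)
  moreover have "w (squash_inv (p+1)) = Some x" using True assms by (simp add: word_concat_def)
  ultimately show ?thesis by blast
next
  case False
  then have F: "0 < p \<and> p < 2" using assms by (auto simp: word_concat_def split: if_splits)
  then have "\<bar>p - 1\<bar> < 1" by (simp add: abs_less_iff)
  then have "p = sq (squash_inv (p - 1)) + 1" by (simp add: sq_sq_inv)
  moreover have "v (squash_inv (p - 1)) = Some x" using False F assms by (simp add: word_concat_def)
  ultimately show ?thesis by blast
qed

lemma supp_concat:
  "supp (word_concat w v) m = (\<lambda>q. sq q - 1) ` supp w m \<union> (\<lambda>q. sq q + 1) ` supp v m"
proof (intro equalityI subsetI)
  fix p assume p: "p \<in> supp (word_concat w v) m"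
  then obtain n g where ng: "word_concat w v p = Some (n, g)" "n < m" by (auto simp: supp_def)
  from concat_some[OF ng(1)] show "p \<in> (\<lambda>q. sq q - 1) ` supp w m \<union> (\<lambda>q. sq q + 1) ` supp v m"
  proof (elim disjE exE conjE)
    fix q assume e: "p = sq q - 1" "w q = Some (n, g)"
    then have "q \<in> supp w m" using ng by (simp add: supp_def)
    then show ?thesis unfolding e by blast
  next
    fix q assume e: "p = sq q + 1" "v q = Some (n, g)"
    then have "q \<in> supp v m" using ng by (simp add: supp_def)
    then show ?thesis unfolding e by blast
  qed
next
  fix p assume "p \<in> (\<lambda>q. sq q - 1) ` supp w m \<union> (\<lambda>q. sq q + 1) ` supp v m"
  then show "p \<in> supp (word_concat w v) m"
    by (auto simp: supp_def concat_L concat_R)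
qed

lemma sq_LR: "sq q - 1 < sq q' + 1"
  using sq_bound[of q] sq_bound[of q'] by (simp add: abs_less_iff)

lemma restr_concat:
  assumes "finite (supp w m)" "finite (supp v m)"
  shows "restr (word_concat w v) m = restr w m @ restr v m"
proof -
  have sl: "sorted_list_of_set (supp (word_concat w v) m) =
     map (\<lambda>q. sq q - 1) (sorted_list_of_set (supp w m)) @ map (\<lambda>q. sq q + 1) (sorted_list_of_set (supp v m))"
    unfolding supp_concat
    apply (subst sl_union)
    using assms apply simp
    using assms apply simp
    using sq_LR apply blast
    apply (subst sl_image, rule assms, simp add: sq_mono)
    apply (subst sl_image, rule assms, simp add: sq_mono)
    ..
  show ?thesis unfolding restr_supp sl by (simp add: comp_def concat_L concat_R)
qed



lemma fp_step_ctx: "fp_step G a b \<Longrightarrow> fp_step G (l @ a @ r) (l @ b @ r)"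
proof (induction rule: fp_step.induct)
  case (merge a n b xs ys)
  show ?case using fp_step.merge[where G=G and a=a and b=b and n=n and xs="l @ xs" and ys="ys @ r"] merge(1,2) by simp
next
  case (delete xs n ys)
  show ?case using fp_step.delete[of G "l @ xs" n "ys @ r"] by simp
qed

lemma equivclp_map:
  assumes "equivclp R x y" "\<And>a b. R a b \<Longrightarrow> R (f a) (f b)"
  shows "equivclp R (f x) (f y)"
  using assms(1) unfolding equivclp_def
proof (induction rule: rtranclp_induct)
  case base then show ?case by simp
next
  case (step y z)
  have "symclp R (f y) (f z)" using step(2) assms(2) by (auto simp: symclp_def)
  then show ?case using step(3) by (rule rtranclp.rtrancl_into_rtrancl[rotated])
qed

lemma fp_eq_refl: "fp_eq G a a" by (simp add: fp_eq_def equivclp_def)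
lemma fp_eq_sym: "fp_eq G a b \<Longrightarrow> fp_eq G b a" by (simp add: fp_eq_def equivclp_sym)
lemma fp_eq_trans: "fp_eq G a b \<Longrightarrow> fp_eq G b c \<Longrightarrow> fp_eq G a c"
  unfolding fp_eq_def equivclp_def by (rule rtranclp_trans)
lemma fp_eq_step: "fp_step G a b \<Longrightarrow> fp_eq G a b"
  unfolding fp_eq_def equivclp_def by (rule r_into_rtranclp) (simp add: symclp_def)

lemma fp_eq_ctx: "fp_eq G a b \<Longrightarrow> fp_eq G (l @ a @ r) (l @ b @ r)"
  unfolding fp_eq_def by (rule equivclp_map[where f="\<lambda>x. l @ x @ r"]) (auto intro: fp_step_ctx)

lemma fp_eq_append: "fp_eq G a b \<Longrightarrow> fp_eq G c d \<Longrightarrow> fp_eq G (a @ c) (b @ d)"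
proof -
  assume ab: "fp_eq G a b" and cd: "fp_eq G c d"
  have "fp_eq G ([] @ a @ c) ([] @ b @ c)" using ab by (rule fp_eq_ctx)
  moreover have "fp_eq G (b @ c @ []) (b @ d @ [])" using cd by (rule fp_eq_ctx)
  ultimately show ?thesis by (auto intro: fp_eq_trans)
qed

lemma word_eq_refl: "word_eq G w w" by (simp add: word_eq_def fp_eq_refl)
lemma word_eq_sym: "word_eq G w v \<Longrightarrow> word_eq G v w" by (simp add: word_eq_def fp_eq_sym)
lemma word_eq_trans: "word_eq G u v \<Longrightarrow> word_eq G v w \<Longrightarrow> word_eq G u w"
  unfolding word_eq_def by (blast intro: fp_eq_trans)
lemma word_eq_restr: "(\<And>m. restr w m = restr v m) \<Longrightarrow> word_eq G w v"
  by (simp add: word_eq_def fp_eq_refl)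

lemma is_word_empty: "is_word G (\<lambda>_. None)" by (simp add: is_word_def)
lemma restr_empty: "restr (\<lambda>_. None) m = []" by (simp add: restr_def)

lemma is_word_concat:
  assumes w: "is_word G w" and v: "is_word G v"
  shows "is_word G (word_concat w v)"
  unfolding is_word_def
proof (rule conjI; intro allI impI)
  fix q n g assume "word_concat w v q = Some (n, g)"
  from concat_some[OF this] show "g \<in> carrier (G n) \<and> g \<noteq> \<one>\<^bsub>G n\<^esub>"
    using w v unfolding is_word_def by blast
next
  fix n
  have "{q. \<exists>g. word_concat w v q = Some (n, g)} \<subseteq>
    (\<lambda>q. sq q - 1) ` {q. \<exists>g. w q = Some (n, g)} \<union> (\<lambda>q. sq q + 1) ` {q. \<exists>g. v q = Some (n, g)}"
    using concat_some by blast
  moreover have "finite ((\<lambda>q. sq q - 1) ` {q. \<exists>g. w q = Some (n, g)} \<union> (\<lambda>q. sq q + 1) ` {q. \<exists>g. v q = Some (n, g)})"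
    using w v unfolding is_word_def by blast
  ultimately show "finite {q. \<exists>g. word_concat w v q = Some (n, g)}" by (rule finite_subset)
qed

lemma restr_concat_w: "is_word G w \<Longrightarrow> is_word G v \<Longrightarrow> restr (word_concat w v) m = restr w m @ restr v m"
  by (rule restr_concat) (simp_all add: finite_supp)

lemma cls_mem: "is_word G w \<Longrightarrow> w \<in> word_class G w"
  by (simp add: word_class_def word_eq_refl)

lemma cls_eqI: "word_eq G w v \<Longrightarrow> word_class G w = word_class G v"
  unfolding word_class_def by (blast intro: word_eq_trans word_eq_sym)

lemma cls_eqD: "is_word G w \<Longrightarrow> word_class G w = word_class G v \<Longrightarrow> word_eq G w v"
  using cls_mem[of G w] by (simp add: word_class_def)

lemma tp_mult_cls:
  assumes w: "is_word G w" and v: "is_word G v"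
  shows "tp_mult G (word_class G w) (word_class G v) = word_class G (word_concat w v)"
proof (intro equalityI subsetI)
  fix u assume "u \<in> tp_mult G (word_class G w) (word_class G v)"
  then obtain x y where u: "is_word G u" and x: "is_word G x" "word_eq G x w"
    and y: "is_word G y" "word_eq G y v" and e: "word_eq G u (word_concat x y)"
    by (auto simp: tp_mult_def word_class_def)
  have "word_eq G (word_concat x y) (word_concat w v)"
    unfolding word_eq_def
  proof
    fix m
    show "fp_eq G (restr (word_concat x y) m) (restr (word_concat w v) m)"
      using x y w v by (simp add: restr_concat_w fp_eq_append word_eq_def)
  qed
  then show "u \<in> word_class G (word_concat w v)"
    using u e by (auto simp: word_class_def intro: word_eq_trans)
next
  fix u assume "u \<in> word_class G (word_concat w v)"
  then show "u \<in> tp_mult G (word_class G w) (word_class G v)"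
    using cls_mem[OF w] cls_mem[OF v] by (auto simp: tp_mult_def word_class_def)
qed

definition invl :: "(nat \<Rightarrow> 'a monoid) \<Rightarrow> 'a letter \<Rightarrow> 'a letter" where
  "invl G x = (fst x, inv\<^bsub>G (fst x)\<^esub> (snd x))"

definition winv :: "(nat \<Rightarrow> 'a monoid) \<Rightarrow> 'a word \<Rightarrow> 'a word" where
  "winv G w q = map_option (invl G) (w (-q))"

lemma supp_winv: "supp (winv G w) m = uminus ` supp w m"
proof (intro equalityI subsetI)
  fix p assume "p \<in> supp (winv G w) m"
  then have "-p \<in> supp w m" by (auto simp: supp_def winv_def invl_def)
  then show "p \<in> uminus ` supp w m" by (metis add.inverse_inverse image_eqI)
next
  fix p assume "p \<in> uminus ` supp w m"
  then show "p \<in> supp (winv G w) m" by (auto simp: supp_def winv_def invl_def)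
qed

lemma restr_winv:
  assumes "is_word G w"
  shows "restr (winv G w) m = rev (map (invl G) (restr w m))"
proof -
  have f: "finite (supp w m)" using assms by (rule finite_supp)
  have "restr (winv G w) m = map (\<lambda>q. the (winv G w q)) (rev (map uminus (sorted_list_of_set (supp w m))))"
    unfolding restr_supp supp_winv sl_neg[OF f] ..
  also have "\<dots> = rev (map (\<lambda>q. the (winv G w (-q))) (sorted_list_of_set (supp w m)))"
    by (simp add: rev_map comp_def)
  also have "map (\<lambda>q. the (winv G w (-q))) (sorted_list_of_set (supp w m)) =
             map (invl G) (map (\<lambda>q. the (w q)) (sorted_list_of_set (supp w m)))"
    using f by (auto simp: winv_def supp_def)
  finally show ?thesis unfolding restr_supp .
qed

lemma is_word_winv:
  assumes gr: "\<And>n. group (G n)" and w: "is_word G w"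
  shows "is_word G (winv G w)"
  unfolding is_word_def
proof (rule conjI; intro allI impI)
  fix q n g assume "winv G w q = Some (n, g)"
  then obtain g' where "w (-q) = Some (n, g')" "g = inv\<^bsub>G n\<^esub> g'"
    by (auto simp: winv_def invl_def)
  then show "g \<in> carrier (G n) \<and> g \<noteq> \<one>\<^bsub>G n\<^esub>"
    using w gr[of n] unfolding is_word_def by (auto simp: group.inv_eq_1_iff)
next
  fix n
  have "{q. \<exists>g. winv G w q = Some (n, g)} \<subseteq> uminus ` {q. \<exists>g. w q = Some (n, g)}"
    by (auto simp: winv_def invl_def image_iff intro!: exI[of _ "- _"])
  moreover have "finite (uminus ` {q. \<exists>g. w q = Some (n, g)})" using w unfolding is_word_def by blast
  ultimately show "finite {q. \<exists>g. winv G w q = Some (n, g)}" by (rule finite_subset)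
qed

lemma restr_carrier:
  assumes "is_word G w" "x \<in> set (restr w m)"
  shows "snd x \<in> carrier (G (fst x))"
proof -
  from assms(2) obtain q where q: "q \<in> set (sorted_list_of_set (supp w m))" "x = the (w q)"
    unfolding restr_supp by auto
  then have "q \<in> supp w m" using finite_supp[OF assms(1)] by simp
  then obtain n g where "w q = Some (n, g)" by (auto simp: supp_def)
  then show ?thesis using q(2) assms(1) unfolding is_word_def by auto
qed

lemma fp_cancel:
  assumes gr: "\<And>n. group (G n)"
  shows "(\<forall>x\<in>set xs. snd x \<in> carrier (G (fst x))) \<Longrightarrow> fp_eq G (rev (map (invl G) xs) @ xs) []"
proof (induction xs)
  case Nil then show ?case by (simp add: fp_eq_refl)
next
  case (Cons x xs)
  obtain n g where x: "x = (n, g)" by (cases x)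
  have g: "g \<in> carrier (G n)" using Cons.prems x by auto
  have ig: "inv\<^bsub>G n\<^esub> g \<in> carrier (G n)" using g gr[of n] by (simp add: group.inv_closed)
  let ?R = "rev (map (invl G) xs)"
  have "rev (map (invl G) (x # xs)) @ x # xs = ?R @ [(n, inv\<^bsub>G n\<^esub> g), (n, g)] @ xs"
    by (simp add: x invl_def)
  moreover have "fp_step G (?R @ [(n, inv\<^bsub>G n\<^esub> g), (n, g)] @ xs) (?R @ [(n, inv\<^bsub>G n\<^esub> g \<otimes>\<^bsub>G n\<^esub> g)] @ xs)"
    by (rule fp_step.merge[where G=G and n=n, OF ig g])
  moreover have "inv\<^bsub>G n\<^esub> g \<otimes>\<^bsub>G n\<^esub> g = \<one>\<^bsub>G n\<^esub>" using g gr[of n] by (simp add: group.l_inv)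
  moreover have "fp_step G (?R @ [(n, \<one>\<^bsub>G n\<^esub>)] @ xs) (?R @ xs)" by (rule fp_step.delete)
  moreover have "fp_eq G (?R @ xs) []" using Cons by simp
  ultimately show ?case by (metis fp_eq_step fp_eq_trans)
qed



lemma T_carrier: "carrier (topologists_product G) = {word_class G w | w. is_word G w}"
  by (simp add: topologists_product_def)
lemma T_mult: "x \<otimes>\<^bsub>topologists_product G\<^esub> y = tp_mult G x y"
  by (simp add: topologists_product_def)
lemma T_one: "\<one>\<^bsub>topologists_product G\<^esub> = word_class G (\<lambda>_. None)"
  by (simp add: topologists_product_def)

lemma T_mult_cls: "is_word G w \<Longrightarrow> is_word G v \<Longrightarrow>
  word_class G w \<otimes>\<^bsub>topologists_product G\<^esub> word_class G v = word_class G (word_concat w v)"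
  by (simp add: T_mult tp_mult_cls)

lemma T_carrierE:
  assumes "x \<in> carrier (topologists_product G)"
  obtains w where "is_word G w" "x = word_class G w"
  using assms by (auto simp: T_carrier)

lemma T_cls_in: "is_word G w \<Longrightarrow> word_class G w \<in> carrier (topologists_product G)"
  by (auto simp: T_carrier)

lemma T_group:
  assumes gr: "\<And>n. group (G n)"
  shows "group (topologists_product G)"
proof (rule groupI)
  fix x y assume "x \<in> carrier (topologists_product G)" "y \<in> carrier (topologists_product G)"
  then show "x \<otimes>\<^bsub>topologists_product G\<^esub> y \<in> carrier (topologists_product G)"
    by (auto elim!: T_carrierE simp: T_mult_cls is_word_concat T_cls_in)
next
  show "\<one>\<^bsub>topologists_product G\<^esub> \<in> carrier (topologists_product G)"
    by (simp add: T_one T_cls_in is_word_empty)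
next
  fix x y z assume "x \<in> carrier (topologists_product G)" "y \<in> carrier (topologists_product G)"
     "z \<in> carrier (topologists_product G)"
  then obtain a b c where abc: "is_word G a" "is_word G b" "is_word G c"
    "x = word_class G a" "y = word_class G b" "z = word_class G c"
    by (metis T_carrierE)
  have "word_eq G (word_concat (word_concat a b) c) (word_concat a (word_concat b c))"
    by (rule word_eq_restr) (simp add: restr_concat_w[OF is_word_concat[OF abc(1,2)] abc(3)]
        restr_concat_w[OF abc(1) is_word_concat[OF abc(2,3)]] restr_concat_w[OF abc(1,2)] restr_concat_w[OF abc(2,3)])
  then show "x \<otimes>\<^bsub>topologists_product G\<^esub> y \<otimes>\<^bsub>topologists_product G\<^esub> z =
             x \<otimes>\<^bsub>topologists_product G\<^esub> (y \<otimes>\<^bsub>topologists_product G\<^esub> z)"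
    by (simp add: abc T_mult_cls is_word_concat cls_eqI)
next
  fix x assume "x \<in> carrier (topologists_product G)"
  then obtain a where a: "is_word G a" "x = word_class G a" by (metis T_carrierE)
  have "word_eq G (word_concat (\<lambda>_. None) a) a"
    by (rule word_eq_restr) (simp add: restr_concat_w[OF is_word_empty a(1)] restr_empty)
  then show "\<one>\<^bsub>topologists_product G\<^esub> \<otimes>\<^bsub>topologists_product G\<^esub> x = x"
    by (simp add: a T_one T_mult_cls is_word_empty cls_eqI)
next
  fix x assume "x \<in> carrier (topologists_product G)"
  then obtain a where a: "is_word G a" "x = word_class G a" by (metis T_carrierE)
  have ia: "is_word G (winv G a)" by (rule is_word_winv[OF gr a(1)])
  have "word_eq G (word_concat (winv G a) a) (\<lambda>_. None)"
    unfolding word_eq_def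
  proof
    fix m
    have "\<forall>x\<in>set (restr a m). snd x \<in> carrier (G (fst x))"
      using restr_carrier[OF a(1)] by blast
    then show "fp_eq G (restr (word_concat (winv G a) a) m) (restr (\<lambda>_. None) m)"
      by (simp add: restr_concat_w[OF ia a(1)] restr_winv[OF a(1)] restr_empty fp_cancel[OF gr])
  qed
  then have "word_class G (winv G a) \<otimes>\<^bsub>topologists_product G\<^esub> x = \<one>\<^bsub>topologists_product G\<^esub>"
    by (simp add: a ia T_one T_mult_cls cls_eqI)
  then show "\<exists>y\<in>carrier (topologists_product G). y \<otimes>\<^bsub>topologists_product G\<^esub> x = \<one>\<^bsub>topologists_product G\<^esub>"
    using T_cls_in[OF ia] by blast
qed

lemma F_sub: "free_product_sub G \<subseteq> carrier (topologists_product G)"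
  by (auto simp: free_product_sub_def T_carrier)

lemma N_normal:
  assumes gr: "\<And>n. group (G n)"
  shows "normal_closure (topologists_product G) (free_product_sub G) \<lhd> topologists_product G"
proof -
  interpret T: group "topologists_product G" by (rule T_group[OF gr])
  let ?T = "topologists_product G"
  let ?S = "\<Union>x\<in>carrier ?T. \<Union>s\<in>free_product_sub G. {x \<otimes>\<^bsub>?T\<^esub> s \<otimes>\<^bsub>?T\<^esub> inv\<^bsub>?T\<^esub> x}"
  have S: "?S \<subseteq> carrier ?T" using F_sub by auto
  show ?thesis unfolding normal_closure_def
  proof (rule T.normal_generateI[OF S])
    fix h g assume h: "h \<in> ?S" and g: "g \<in> carrier ?T"
    then obtain x s where xs: "x \<in> carrier ?T" "s \<in> free_product_sub G"
      "h = x \<otimes>\<^bsub>?T\<^esub> s \<otimes>\<^bsub>?T\<^esub> inv\<^bsub>?T\<^esub> x" by blast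
    have s: "s \<in> carrier ?T" using xs(2) F_sub by blast
    have "g \<otimes>\<^bsub>?T\<^esub> h \<otimes>\<^bsub>?T\<^esub> inv\<^bsub>?T\<^esub> g =
          (g \<otimes>\<^bsub>?T\<^esub> x) \<otimes>\<^bsub>?T\<^esub> s \<otimes>\<^bsub>?T\<^esub> inv\<^bsub>?T\<^esub> (g \<otimes>\<^bsub>?T\<^esub> x)"
      using g xs(1) s by (simp add: xs(3) T.inv_mult_group T.m_assoc)
    then show "g \<otimes>\<^bsub>?T\<^esub> h \<otimes>\<^bsub>?T\<^esub> inv\<^bsub>?T\<^esub> g \<in> ?S"
      using g xs(1,2) by blast
  qed
qed



definition mrestr :: "'a word \<Rightarrow> (rat \<Rightarrow> bool) \<Rightarrow> 'a word" where
  "mrestr w P = (\<lambda>p. if P p then w p else None)"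

lemma supp_mrestr: "supp (mrestr w P) m = {p \<in> supp w m. P p}"
  by (auto simp: supp_def mrestr_def)

lemma is_word_mrestr: "is_word G w \<Longrightarrow> is_word G (mrestr w P)"
  unfolding is_word_def mrestr_def
proof (rule conjI; (elim conjE)?)
  assume a: "\<forall>q n g. w q = Some (n, g) \<longrightarrow> g \<in> carrier (G n) \<and> g \<noteq> \<one>\<^bsub>G n\<^esub>"
    "\<forall>n. finite {q. \<exists>g. w q = Some (n, g)}"
  show "\<forall>q n g. (if P q then w q else None) = Some (n, g) \<longrightarrow> g \<in> carrier (G n) \<and> g \<noteq> \<one>\<^bsub>G n\<^esub>"
    using a(1) by simp
  show "\<forall>n. finite {q. \<exists>g. (if P q then w q else None) = Some (n, g)}"
  proof
    fix n
    have "{q. \<exists>g. (if P q then w q else None) = Some (n, g)} \<subseteq> {q. \<exists>g. w q = Some (n, g)}" by auto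
    then show "finite {q. \<exists>g. (if P q then w q else None) = Some (n, g)}"
      by (rule finite_subset) (use a(2) in blast)
  qed
qed

lemma restr_cut:
  assumes f: "finite (supp w m)" and P: "\<And>x y. P x \<Longrightarrow> \<not> P y \<Longrightarrow> x < y"
  shows "restr w m = restr (mrestr w P) m @ restr (mrestr w (\<lambda>p. \<not> P p)) m"
proof -
  have u: "supp w m = {p \<in> supp w m. P p} \<union> {p \<in> supp w m. \<not> P p}" by auto
  have sl: "sorted_list_of_set (supp w m) = sorted_list_of_set {p \<in> supp w m. P p} @ sorted_list_of_set {p \<in> supp w m. \<not> P p}"
    by (subst u, rule sl_union) (use f P in auto)
  have A: "map (\<lambda>q. the (w q)) (sorted_list_of_set {p \<in> supp w m. P p}) = restr (mrestr w P) m"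
    unfolding restr_supp supp_mrestr using f by (auto simp: mrestr_def)
  have B: "map (\<lambda>q. the (w q)) (sorted_list_of_set {p \<in> supp w m. \<not> P p}) = restr (mrestr w (\<lambda>p. \<not> P p)) m"
    unfolding restr_supp supp_mrestr using f by (auto simp: mrestr_def)
  show ?thesis unfolding restr_supp[of w] sl using A B by (simp add: restr_supp)
qed

definition pt :: "rat \<Rightarrow> 'a letter \<Rightarrow> 'a word" where
  "pt q a = (\<lambda>p. if p = q then Some a else None)"

lemma restr_pt: "restr (pt q a) m = (if fst a < m then [a] else [])"
proof -
  have "supp (pt q a) m = (if fst a < m then {q} else {})"
    by (cases a) (auto simp: supp_def pt_def)
  then show ?thesis by (simp add: restr_supp pt_def)
qed

lemma is_word_pt: "snd a \<in> carrier (G (fst a)) \<Longrightarrow> snd a \<noteq> \<one>\<^bsub>G (fst a)\<^esub> \<Longrightarrow> is_word G (pt q a)"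
proof -
  assume a: "snd a \<in> carrier (G (fst a))" "snd a \<noteq> \<one>\<^bsub>G (fst a)\<^esub>"
  have "\<And>n. {p. \<exists>g. pt q a p = Some (n, g)} \<subseteq> {q}" by (auto simp: pt_def)
  then have "\<And>n. finite {p. \<exists>g. pt q a p = Some (n, g)}" by (meson finite.emptyI finite_insert finite_subset)
  then show ?thesis using a unfolding is_word_def by (auto simp: pt_def)
qed

definition del :: "rat set \<Rightarrow> 'a word \<Rightarrow> 'a word" where
  "del D w = mrestr w (\<lambda>p. p \<notin> D)"

definition wr :: "'a word \<Rightarrow> nat \<Rightarrow> 'a word" where
  "wr w k = del (supp w k) w"

locale arch =
  fixes G :: "nat \<Rightarrow> 'a monoid" and f :: "'a word set \<Rightarrow> int"
  assumes gr: "\<And>n. group (G n)"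
    and hom: "f \<in> hom (topologists_product G) integer_group"
    and killN: "\<And>x. x \<in> normal_closure (topologists_product G) (free_product_sub G) \<Longrightarrow> f x = 0"
begin

abbreviation "T \<equiv> topologists_product G"

lemma Tgroup: "group T" by (rule T_group[OF gr])

lemma f_mult: "x \<in> carrier T \<Longrightarrow> y \<in> carrier T \<Longrightarrow> f (x \<otimes>\<^bsub>T\<^esub> y) = f x + f y"
  using hom unfolding hom_def by (simp add: integer_group_def)

lemma f_one: "f \<one>\<^bsub>T\<^esub> = 0"
proof -
  interpret group T by (rule Tgroup)
  have "f (\<one>\<^bsub>T\<^esub> \<otimes>\<^bsub>T\<^esub> \<one>\<^bsub>T\<^esub>) = f \<one>\<^bsub>T\<^esub> + f \<one>\<^bsub>T\<^esub>" by (rule f_mult) simp_all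
  then show ?thesis by simp
qed

lemma f_cls_concat: "is_word G w \<Longrightarrow> is_word G v \<Longrightarrow>
   f (word_class G (word_concat w v)) = f (word_class G w) + f (word_class G v)"
  by (simp add: T_mult_cls[symmetric] f_mult T_cls_in)

lemma remove_one:
  assumes w: "is_word G w" and a: "w q = Some a"
  shows "f (word_class G w) = f (word_class G (w(q := None)))"
proof -
  interpret group T by (rule Tgroup)
  define L where "L = mrestr w (\<lambda>p. p < q)"
  define R where "R = mrestr w (\<lambda>p. \<not> p \<le> q)"
  define s where "s = pt 0 a"
  have aw: "snd a \<in> carrier (G (fst a))" "snd a \<noteq> \<one>\<^bsub>G (fst a)\<^esub>"
    using w a unfolding is_word_def by (cases a; auto)+
  have Lw: "is_word G L" unfolding L_def by (rule is_word_mrestr[OF w])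
  have Rw: "is_word G R" unfolding R_def by (rule is_word_mrestr[OF w])
  have sw: "is_word G s" unfolding s_def by (rule is_word_pt[where G=G, OF aw])
  have w'w: "is_word G (w(q := None))"
  proof -
    have "w(q := None) = mrestr w (\<lambda>p. p \<noteq> q)" by (auto simp: mrestr_def)
    then show ?thesis using is_word_mrestr[OF w] by simp
  qed
  have e1: "word_eq G w (word_concat (word_concat L s) R)"
  proof (rule word_eq_restr)
    fix m
    have f1: "finite (supp w m)" by (rule finite_supp[OF w])
    have f2: "finite (supp (mrestr w (\<lambda>p. \<not> p < q)) m)" by (rule finite_supp[OF is_word_mrestr[OF w]])
    have m1: "mrestr (mrestr w (\<lambda>p. \<not> p < q)) (\<lambda>p. p \<le> q) = pt q a"
      using a by (auto simp: mrestr_def pt_def)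
    have m2: "mrestr (mrestr w (\<lambda>p. \<not> p < q)) (\<lambda>p. \<not> p \<le> q) = R"
      unfolding R_def by (auto simp: mrestr_def)
    have "restr w m = restr L m @ restr (mrestr w (\<lambda>p. \<not> p < q)) m"
      unfolding L_def by (rule restr_cut[OF f1]) auto
    also have "restr (mrestr w (\<lambda>p. \<not> p < q)) m = restr (pt q a) m @ restr R m"
      using restr_cut[OF f2, of "\<lambda>p. p \<le> q"] m1 m2 by fastforce
    finally have "restr w m = restr L m @ restr (pt q a) m @ restr R m" .
    moreover have rs: "restr s m = restr (pt q a) m" by (simp add: s_def restr_pt)
    ultimately show "restr w m = restr (word_concat (word_concat L s) R) m"
      by (simp add: restr_concat_w[OF is_word_concat[OF Lw sw] Rw] restr_concat_w[OF Lw sw])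
  qed
  have e2: "word_eq G (w(q := None)) (word_concat L R)"
  proof (rule word_eq_restr)
    fix m
    have f1: "finite (supp (w(q := None)) m)" by (rule finite_supp[OF w'w])
    have m1: "mrestr (w(q := None)) (\<lambda>p. p < q) = L" unfolding L_def by (auto simp: mrestr_def)
    have m2: "mrestr (w(q := None)) (\<lambda>p. \<not> p < q) = R" unfolding R_def by (auto simp: mrestr_def)
    show "restr (w(q := None)) m = restr (word_concat L R) m"
      using restr_cut[OF f1, of "\<lambda>p. p < q"] m1 m2 by (simp add: restr_concat_w[OF Lw Rw])
  qed
  let ?l = "word_class G L" and ?s = "word_class G s" and ?r = "word_class G R"
  have c: "?l \<in> carrier T" "?s \<in> carrier T" "?r \<in> carrier T"
    using Lw sw Rw by (simp_all add: T_cls_in)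
  have x: "word_class G w = ?l \<otimes>\<^bsub>T\<^esub> ?s \<otimes>\<^bsub>T\<^esub> ?r"
    using e1 by (simp add: cls_eqI T_mult_cls Lw sw Rw is_word_concat)
  have y: "word_class G (w(q := None)) = ?l \<otimes>\<^bsub>T\<^esub> ?r"
    using e2 by (simp add: cls_eqI T_mult_cls Lw Rw)
  have sF: "?s \<in> free_product_sub G"
  proof -
    have "dom s \<subseteq> {0}" by (auto simp: s_def pt_def split: if_splits)
    then have "finite (dom s)" using finite_subset by blast
    then show ?thesis using sw unfolding free_product_sub_def by blast
  qed
  have n: "?l \<otimes>\<^bsub>T\<^esub> ?s \<otimes>\<^bsub>T\<^esub> inv\<^bsub>T\<^esub> ?l \<in> normal_closure T (free_product_sub G)"
    unfolding normal_closure_def by (rule generate.incl) (use c sF in blast)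
  have "?l \<otimes>\<^bsub>T\<^esub> ?s \<otimes>\<^bsub>T\<^esub> ?r = (?l \<otimes>\<^bsub>T\<^esub> ?s \<otimes>\<^bsub>T\<^esub> inv\<^bsub>T\<^esub> ?l) \<otimes>\<^bsub>T\<^esub> (?l \<otimes>\<^bsub>T\<^esub> ?r)"
  proof -
    have "inv\<^bsub>T\<^esub> ?l \<otimes>\<^bsub>T\<^esub> (?l \<otimes>\<^bsub>T\<^esub> ?r) = ?r" using c by (simp add: m_assoc[symmetric])
    then show ?thesis using c by (simp add: m_assoc)
  qed
  then have "f (word_class G w) = f (?l \<otimes>\<^bsub>T\<^esub> ?s \<otimes>\<^bsub>T\<^esub> inv\<^bsub>T\<^esub> ?l) + f (?l \<otimes>\<^bsub>T\<^esub> ?r)"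
    using x c by (simp add: f_mult)
  then show ?thesis using killN[OF n] y by simp
qed

end


lemma concat_eq:
  "word_concat w v p = (if -2 < p \<and> p < 0 then w (squash_inv (p + 1))
      else if 0 < p \<and> p < 2 then v (squash_inv (p - 1)) else None)"
  by (simp add: word_concat_def)

fun pw :: "nat \<Rightarrow> 'a word \<Rightarrow> 'a word" where
  "pw 0 u = (\<lambda>_. None)"
| "pw (Suc n) u = word_concat u (pw n u)"

definition Phi :: "(nat \<Rightarrow> 'a word) \<Rightarrow> nat \<Rightarrow> nat \<Rightarrow> 'a word \<Rightarrow> 'a word" where
  "Phi W B k u = word_concat (W k) (pw B u)"

fun zf :: "(nat \<Rightarrow> 'a word) \<Rightarrow> nat \<Rightarrow> nat \<Rightarrow> nat \<Rightarrow> 'a word" where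
  "zf W B 0 k = (\<lambda>_. None)"
| "zf W B (Suc j) k = Phi W B k (zf W B j (Suc k))"

definition zl :: "(nat \<Rightarrow> 'a word) \<Rightarrow> nat \<Rightarrow> nat \<Rightarrow> 'a word" where
  "zl W B k p = (if \<exists>j. zf W B j k p \<noteq> None then zf W B (SOME j. zf W B j k p \<noteq> None) k p else None)"

definition wge :: "(nat \<Rightarrow> 'a word) \<Rightarrow> bool" where
  "wge W \<longleftrightarrow> (\<forall>k p n g. W k p = Some (n, g) \<longrightarrow> k \<le> n)"

lemma pw_pt: "(\<exists>q. \<forall>u::'a word. pw n u p = u q) \<or> (\<forall>u::'a word. pw n u p = None)"
proof (induction n arbitrary: p)
  case 0 then show ?case by simp
next
  case (Suc n)
  show ?case
  proof (cases "-2 < p \<and> p < 0")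
    case True
    then have "\<forall>u::'a word. pw (Suc n) u p = u (squash_inv (p + 1))" by (simp add: concat_eq)
    then show ?thesis by blast
  next
    case False
    show ?thesis
    proof (cases "0 < p \<and> p < 2")
      case True
      then have e: "\<forall>u::'a word. pw (Suc n) u p = pw n u (squash_inv (p - 1))" using False by (simp add: concat_eq)
      from Suc.IH[of "squash_inv (p - 1)"] show ?thesis
      proof
        assume "\<exists>q. \<forall>u::'a word. pw n u (squash_inv (p - 1)) = u q"
        then obtain q where q: "\<forall>u::'a word. pw n u (squash_inv (p - 1)) = u q" by blast
        have "\<forall>u::'a word. pw (Suc n) u p = u q" using e q by simp
        then show ?thesis by blast
      next
        assume "\<forall>u::'a word. pw n u (squash_inv (p - 1)) = None"
        then have "\<forall>u::'a word. pw (Suc n) u p = None" using e by simp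
        then show ?thesis by blast
      qed
    next
      case False2: False
      then have "\<forall>u::'a word. pw (Suc n) u p = None" using False by (auto simp: concat_eq)
      then show ?thesis by blast
    qed
  qed
qed

lemma Phi_pt: "(\<exists>q. \<forall>u::'a word. Phi W B k u p = u q) \<or> (\<forall>(u::'a word) (u'::'a word). Phi W B k u p = Phi W B k u' p)"
proof (cases "0 < p \<and> p < 2")
  case True
  then have e: "\<forall>u::'a word. Phi W B k u p = pw B u (squash_inv (p - 1))" by (simp add: Phi_def concat_eq)
  from pw_pt[of B "squash_inv (p - 1)"] show ?thesis
  proof
    assume "\<exists>q. \<forall>u::'a word. pw B u (squash_inv (p - 1)) = u q"
    then obtain q where q: "\<forall>u::'a word. pw B u (squash_inv (p - 1)) = u q" by blast
    have "\<forall>u::'a word. Phi W B k u p = u q" using e q by simp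
    then show ?thesis by blast
  next
    assume "\<forall>u::'a word. pw B u (squash_inv (p - 1)) = None"
    then have "\<forall>u::'a word. Phi W B k u p = None" using e by simp
    then show ?thesis by simp
  qed
next
  case False
  then have "\<forall>(u::'a word) (u'::'a word). Phi W B k u p = Phi W B k u' p"
    by (auto simp: Phi_def concat_eq)
  then show ?thesis by blast
qed

lemma zf_mono: "zf W B j k p = Some x \<Longrightarrow> zf W B (Suc j) k p = Some x"
proof (induction j arbitrary: k p)
  case 0 then show ?case by simp
next
  case (Suc j)
  from Phi_pt[of W B k p] show ?case
  proof
    assume "\<exists>q. \<forall>u::'a word. Phi W B k u p = u q"
    then obtain q where q: "\<forall>u::'a word. Phi W B k u p = u q" by blast
    then have "zf W B j (Suc k) q = Some x" using Suc.prems by simp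
    then have "zf W B (Suc j) (Suc k) q = Some x" by (rule Suc.IH)
    then show ?thesis using q by simp
  next
    assume "\<forall>(u::'a word) (u'::'a word). Phi W B k u p = Phi W B k u' p"
    then show ?thesis using Suc.prems by (metis zf.simps(2))
  qed
qed

lemma zf_mono_le: "j \<le> j' \<Longrightarrow> zf W B j k p = Some x \<Longrightarrow> zf W B j' k p = Some x"
proof (induction j' rule: dec_induct)
  case base then show ?case by simp
next
  case (step n)
  have "zf W B n k p = Some x" using step by simp
  then show ?case by (rule zf_mono)
qed

lemma pw_ge:
  assumes "\<And>p n g. u p = Some (n, g) \<Longrightarrow> k \<le> n" "pw m u p = Some (n, g)"
  shows "k \<le> n"
  using pw_pt[of m p]
proof
  assume "\<exists>q. \<forall>u::'a word. pw m u p = u q"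
  then obtain q where "\<forall>u::'a word. pw m u p = u q" by blast
  then have "u q = Some (n, g)" using assms(2) by simp
  then show ?thesis by (rule assms(1))
next
  assume "\<forall>u::'a word. pw m u p = None"
  then show ?thesis using assms(2) by simp
qed

lemma zf_ge:
  assumes W: "wge W"
  shows "zf W B j k p = Some (n, g) \<Longrightarrow> k \<le> n"
proof (induction j arbitrary: k p n g)
  case 0 then show ?case by simp
next
  case (Suc j)
  then have "word_concat (W k) (pw B (zf W B j (Suc k))) p = Some (n, g)" by (simp add: Phi_def)
  from concat_some[OF this] show ?case
  proof (elim disjE exE conjE)
    fix q assume "W k q = Some (n, g)" then show ?thesis using W unfolding wge_def by blast
  next
    fix q assume "pw B (zf W B j (Suc k)) q = Some (n, g)"
    then have "Suc k \<le> n" by (rule pw_ge[rotated]) (rule Suc.IH)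
    then show ?thesis by simp
  qed
qed

lemma zf_down:
  assumes W: "wge W"
  shows "zf W B j k p = Some (n, g) \<Longrightarrow> n < k + i \<Longrightarrow> zf W B i k p = Some (n, g)"
proof (induction i arbitrary: j k p)
  case 0 then show ?case using zf_ge[OF W, of B j k p n g] by simp
next
  case (Suc i)
  obtain j' where j: "j = Suc j'" using Suc.prems(1) by (cases j) auto
  from Phi_pt[of W B k p] show ?case
  proof
    assume "\<exists>q. \<forall>u::'a word. Phi W B k u p = u q"
    then obtain q where q: "\<forall>u::'a word. Phi W B k u p = u q" by blast
    then have "zf W B j' (Suc k) q = Some (n, g)" using Suc.prems(1) j by simp
    then have "zf W B i (Suc k) q = Some (n, g)" by (rule Suc.IH) (use Suc.prems(2) in simp)
    then show ?thesis using q by simp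
  next
    assume "\<forall>(u::'a word) (u'::'a word). Phi W B k u p = Phi W B k u' p"
    then show ?thesis using Suc.prems(1) j by (metis zf.simps(2))
  qed
qed

lemma zl_some: "zl W B k p = Some x \<Longrightarrow> \<exists>j. zf W B j k p = Some x"
proof -
  assume a: "zl W B k p = Some x"
  show ?thesis
  proof (cases "\<exists>j. zf W B j k p \<noteq> None")
    case True
    then have "zf W B (SOME j. zf W B j k p \<noteq> None) k p = Some x" using a by (simp add: zl_def)
    then show ?thesis by blast
  next
    case False
    then show ?thesis using a by (simp add: zl_def)
  qed
qed

lemma zl_of: "zf W B j k p = Some x \<Longrightarrow> zl W B k p = Some x"
proof -
  assume a: "zf W B j k p = Some x"
  then have ex: "\<exists>j. zf W B j k p \<noteq> None" by (intro exI[of _ j]) simp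
  define j' where "j' = (SOME j. zf W B j k p \<noteq> None)"
  have "zf W B j' k p \<noteq> None" unfolding j'_def by (rule someI_ex[OF ex])
  then obtain y where y: "zf W B j' k p = Some y" by auto
  have "y = x"
  proof (cases "j \<le> j'")
    case True then show ?thesis using zf_mono_le[OF True a] y by simp
  next
    case False then show ?thesis using zf_mono_le[of j' j, OF _ y] a by simp
  qed
  then show ?thesis using ex y unfolding zl_def j'_def by simp
qed

lemma supp_zl:
  assumes W: "wge W" and mi: "m \<le> k + i"
  shows "supp (zl W B k) m = supp (zf W B i k) m"
    and "\<And>p. p \<in> supp (zl W B k) m \<Longrightarrow> zl W B k p = zf W B i k p"
proof -
  have A: "zl W B k p = Some (n, g) \<Longrightarrow> n < m \<Longrightarrow> zf W B i k p = Some (n, g)" for p n g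
  proof -
    assume "zl W B k p = Some (n, g)" "n < m"
    then obtain j where "zf W B j k p = Some (n, g)" using zl_some by blast
    then show ?thesis by (rule zf_down[OF W]) (use \<open>n < m\<close> mi in simp)
  qed
  show "supp (zl W B k) m = supp (zf W B i k) m"
    unfolding supp_def using A zl_of by blast
  show "\<And>p. p \<in> supp (zl W B k) m \<Longrightarrow> zl W B k p = zf W B i k p"
    unfolding supp_def using A by auto
qed

lemma restr_zl:
  assumes W: "wge W" and mi: "m \<le> k + i"
    and fin: "finite (supp (zl W B k) m)"
  shows "restr (zl W B k) m = restr (zf W B i k) m"
  unfolding restr_supp using supp_zl[OF W mi] fin by simp

lemma is_word_pw: "is_word G u \<Longrightarrow> is_word G (pw n u)"
  by (induction n) (simp_all add: is_word_empty is_word_concat)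

lemma restr_pw: "is_word G u \<Longrightarrow> restr (pw n u) m = concat (replicate n (restr u m))"
  by (induction n) (simp_all add: restr_empty restr_concat_w is_word_pw)

lemma is_word_zf:
  assumes "\<And>k. is_word G (W k)"
  shows "is_word G (zf W B j k)"
  using assms by (induction j arbitrary: k) (simp_all add: is_word_empty is_word_concat is_word_pw Phi_def)

lemma is_word_zl:
  assumes Ww: "\<And>k. is_word G (W k)" and W: "wge W"
  shows "is_word G (zl W B k)"
  unfolding is_word_def
proof (rule conjI; intro allI impI)
  fix q n g assume "zl W B k q = Some (n, g)"
  then obtain j where "zf W B j k q = Some (n, g)" using zl_some by blast
  then show "g \<in> carrier (G n) \<and> g \<noteq> \<one>\<^bsub>G n\<^esub>"
    using is_word_zf[where W=W and B=B and j=j and k=k, OF Ww] unfolding is_word_def by blast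
next
  fix n
  have "{q. \<exists>g. zl W B k q = Some (n, g)} \<subseteq> {q. \<exists>g. zf W B (Suc n) k q = Some (n, g)}"
  proof
    fix q assume "q \<in> {q. \<exists>g. zl W B k q = Some (n, g)}"
    then obtain g j where "zf W B j k q = Some (n, g)" using zl_some by blast
    then have "zf W B (Suc n) k q = Some (n, g)" by (rule zf_down[OF W]) simp
    then show "q \<in> {q. \<exists>g. zf W B (Suc n) k q = Some (n, g)}" by blast
  qed
  moreover have "finite {q. \<exists>g. zf W B (Suc n) k q = Some (n, g)}"
    using is_word_zf[where W=W and B=B and j="Suc n" and k=k, OF Ww] unfolding is_word_def by blast
  ultimately show "finite {q. \<exists>g. zl W B k q = Some (n, g)}" by (rule finite_subset)
qed

lemma zl_eq:
  assumes Ww: "\<And>k. is_word G (W k)" and W: "wge W"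
  shows "word_eq G (zl W B k) (Phi W B k (zl W B (Suc k)))"
proof (rule word_eq_restr)
  fix m
  have z1: "is_word G (zl W B k)" "is_word G (zl W B (Suc k))" by (rule is_word_zl[OF Ww W])+
  have "restr (zl W B k) m = restr (zf W B (Suc m) k) m"
    by (rule restr_zl[OF W]) (simp_all add: finite_supp[OF z1(1)])
  also have "\<dots> = restr (W k) m @ concat (replicate B (restr (zf W B m (Suc k)) m))"
    by (simp add: Phi_def restr_concat_w[OF Ww is_word_pw[OF is_word_zf[OF Ww]]] restr_pw[OF is_word_zf[OF Ww]])
  also have "restr (zf W B m (Suc k)) m = restr (zl W B (Suc k)) m"
    by (rule restr_zl[OF W, symmetric]) (simp_all add: finite_supp[OF z1(2)])
  also have "restr (W k) m @ concat (replicate B (restr (zl W B (Suc k)) m)) = restr (Phi W B k (zl W B (Suc k))) m"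
    by (simp add: Phi_def restr_concat_w[OF Ww is_word_pw[OF z1(2)]] restr_pw[OF z1(2)])
  finally show "restr (zl W B k) m = restr (Phi W B k (zl W B (Suc k))) m" .
qed



lemma no_solution:
  fixes u :: "nat \<Rightarrow> int" and c :: int and B :: nat
  assumes rec: "\<And>k. u k = c + int B * u (Suc k)" and B: "B = nat \<bar>c\<bar> + 2"
  shows "c = 0"
proof -
  define v where "v k = (int B - 1) * u k + c" for k
  have vrec: "v k = int B * v (Suc k)" for k
    unfolding v_def by (subst rec) (simp add: algebra_simps)
  have vpow: "v 0 = int B ^ k * v k" for k
  proof (induction k)
    case 0 then show ?case by simp
  next
    case (Suc k) then show ?case using vrec[of k] by simp
  qed
  have v0: "v 0 = 0"
  proof (rule ccontr)
    assume ne: "v 0 \<noteq> 0"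
    define k where "k = nat \<bar>v 0\<bar>"
    have vk: "v k \<noteq> 0" using ne vpow[of k] by auto
    have "\<bar>v 0\<bar> = int B ^ k * \<bar>v k\<bar>" using vpow[of k] by (simp add: abs_mult)
    also have "\<dots> \<ge> int B ^ k" using vk B by simp
    finally have "\<bar>v 0\<bar> \<ge> int B ^ k" .
    moreover have "int B ^ k \<ge> 2 ^ k" using B by (simp add: power_mono)
    moreover have "(2::int) ^ k > int k"
    proof -
      have "k < 2 ^ k" by (rule less_exp)
      then have "int k < int (2 ^ k)" by (simp only: of_nat_less_iff)
      then show ?thesis by simp
    qed
    moreover have "int k = \<bar>v 0\<bar>" unfolding k_def by simp
    ultimately show False by linarith
  qed
  have bb: "int B - 1 = \<bar>c\<bar> + 1" using B by simp
  have e: "(\<bar>c\<bar> + 1) * u 0 + c = 0" using v0 unfolding v_def bb .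
  show ?thesis
  proof (cases "u 0 = 0")
    case True then show ?thesis using e by simp
  next
    case False
    then have "\<bar>u 0\<bar> \<ge> 1" by simp
    then have "\<bar>(\<bar>c\<bar> + 1) * u 0\<bar> \<ge> \<bar>c\<bar> + 1"
      by (simp add: abs_mult mult_le_cancel_left1)
    moreover have "(\<bar>c\<bar> + 1) * u 0 = - c" using e by linarith
    ultimately show ?thesis by simp
  qed
qed

context arch
begin

lemma del_empty: "del {} w = w" by (simp add: del_def mrestr_def)
lemma del_insert: "del (insert q D) w = (del D w)(q := None)"
  by (auto simp: del_def mrestr_def)

lemma remove_set:
  assumes "finite D" and w: "is_word G w"
  shows "f (word_class G w) = f (word_class G (del D w))"
  using assms(1)
proof (induction D rule: finite_induct)
  case empty then show ?case by (simp add: del_empty)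
next
  case (insert q D)
  have dw: "is_word G (del D w)" unfolding del_def by (rule is_word_mrestr[OF w])
  show ?case
  proof (cases "del D w q")
    case None
    then have "del (insert q D) w = del D w" by (simp add: del_insert fun_upd_idem)
    then show ?thesis using insert.IH by simp
  next
    case (Some a)
    have "f (word_class G (del D w)) = f (word_class G ((del D w)(q := None)))"
      by (rule remove_one[OF dw Some])
    then show ?thesis using insert.IH by (simp only: del_insert)
  qed
qed

lemma is_word_wr: "is_word G w \<Longrightarrow> is_word G (wr w k)"
  unfolding wr_def del_def by (rule is_word_mrestr)

lemma wr_f: "is_word G w \<Longrightarrow> f (word_class G (wr w k)) = f (word_class G w)"
  unfolding wr_def by (rule remove_set[OF finite_supp, symmetric])

lemma wge_wr: "wge (wr w)"
  unfolding wge_def wr_def del_def mrestr_def supp_def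
  by (auto split: if_splits)

lemma f_pw: "is_word G u \<Longrightarrow> f (word_class G (pw n u)) = int n * f (word_class G u)"
proof (induction n)
  case 0 then show ?case using f_one by (simp add: T_one)
next
  case (Suc n)
  then show ?case by (simp add: f_cls_concat is_word_pw algebra_simps)
qed

lemma f_zero: "is_word G w \<Longrightarrow> f (word_class G w) = 0"
proof -
  assume w: "is_word G w"
  define c where "c = f (word_class G w)"
  define B where "B = nat \<bar>c\<bar> + 2"
  define W where "W = wr w"
  have Ww: "\<And>k. is_word G (W k)" unfolding W_def by (rule is_word_wr[OF w])
  have Wg: "wge W" unfolding W_def by (rule wge_wr)
  have Wf: "f (word_class G (W k)) = c" for k unfolding W_def c_def by (rule wr_f[OF w])
  define u where "u k = f (word_class G (zl W B k))" for k
  have "u k = c + int B * u (Suc k)" for k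
  proof -
    have z: "is_word G (zl W B (Suc k))" by (rule is_word_zl[OF Ww Wg])
    have "u k = f (word_class G (Phi W B k (zl W B (Suc k))))"
      unfolding u_def using cls_eqI[OF zl_eq[OF Ww Wg]] by simp
    also have "\<dots> = c + int B * u (Suc k)"
      unfolding Phi_def u_def by (simp add: f_cls_concat[OF Ww is_word_pw[OF z]] Wf f_pw[OF z])
    finally show ?thesis .
  qed
  from no_solution[where u=u and c=c and B=B, OF this B_def] show ?thesis unfolding c_def .
qed

end

lemma second_part:
  fixes G :: "nat \<Rightarrow> 'a monoid"
  assumes gr: "\<And>n. group (G n)"
    and h: "h \<in> hom (archipelago G) integer_group" and Q: "Q \<in> carrier (archipelago G)"
  shows "h Q = 0"
proof -
  let ?T = "topologists_product G"
  let ?N = "normal_closure ?T (free_product_sub G)"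
  have Nn: "?N \<lhd> ?T" by (rule N_normal[OF gr])
  have A: "archipelago G = ?T Mod ?N" by (simp add: archipelago_def)
  have Ag: "group (archipelago G)" unfolding A by (rule normal.factorgroup_is_group[OF Nn])
  have hmul: "\<And>x y. x \<in> carrier (archipelago G) \<Longrightarrow> y \<in> carrier (archipelago G) \<Longrightarrow>
      h (x \<otimes>\<^bsub>archipelago G\<^esub> y) = h x + h y"
    using h unfolding hom_def by (simp add: integer_group_def)
  have o: "\<one>\<^bsub>archipelago G\<^esub> \<in> carrier (archipelago G)"
    by (rule monoid.one_closed[OF group.is_monoid[OF Ag]])
  have oo: "\<one>\<^bsub>archipelago G\<^esub> \<otimes>\<^bsub>archipelago G\<^esub> \<one>\<^bsub>archipelago G\<^esub> = \<one>\<^bsub>archipelago G\<^esub>"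
    by (rule monoid.l_one[OF group.is_monoid[OF Ag] o])
  have h1: "h \<one>\<^bsub>archipelago G\<^esub> = 0"
    using hmul[OF o o] oo by simp
  define f where "f = h \<circ> (\<lambda>a. ?N #>\<^bsub>?T\<^esub> a)"
  have fh: "f \<in> hom ?T integer_group"
    unfolding f_def by (rule hom_compose[OF normal.r_coset_hom_Mod[OF Nn]]) (use h A in simp)
  have ar: "arch G f"
  proof (rule arch.intro)
    show "\<And>n. group (G n)" by (rule gr)
    show "f \<in> hom ?T integer_group" by (rule fh)
    fix x assume x: "x \<in> ?N"
    have "?N #>\<^bsub>?T\<^esub> x = ?N"
      by (rule subgroup.rcos_const[OF normal_imp_subgroup[OF Nn] T_group[OF gr] x])
    moreover have "\<one>\<^bsub>archipelago G\<^esub> = ?N" by (simp add: A FactGroup_def)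
    ultimately show "f x = 0" using h1 by (simp add: f_def)
  qed
  obtain x where x: "x \<in> carrier ?T" "Q = ?N #>\<^bsub>?T\<^esub> x"
    using Q unfolding A by (auto simp: FactGroup_def RCOSETS_def)
  obtain w where w: "is_word G w" "x = word_class G w" using x(1) by (rule T_carrierE)
  have "f x = 0" using arch.f_zero[OF ar w(1)] w(2) by simp
  then show "h Q = 0" using x(2) by (simp add: f_def)
qed

theorem main:
  fixes G :: "nat \<Rightarrow> 'a monoid"
  assumes gr: "\<And>n. group (G n)"
  shows "\<not> (\<exists>N. N \<lhd> archipelago G \<and> archipelago G Mod N \<cong> integer_group) \<and>
         (\<forall>h \<in> hom (archipelago G) integer_group. \<forall>x \<in> carrier (archipelago G). h x = 0)"
proof
  show second: "\<forall>h \<in> hom (archipelago G) integer_group. \<forall>x \<in> carrier (archipelago G). h x = 0"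
    by (intro ballI) (rule second_part[OF gr])
  show "\<not> (\<exists>N. N \<lhd> archipelago G \<and> archipelago G Mod N \<cong> integer_group)"
  proof
    assume "\<exists>N. N \<lhd> archipelago G \<and> archipelago G Mod N \<cong> integer_group"
    then obtain M where M: "M \<lhd> archipelago G" "archipelago G Mod M \<cong> integer_group" by (elim exE conjE)
    obtain \<phi> where phi: "\<phi> \<in> iso (archipelago G Mod M) integer_group"
      using M(2) unfolding is_iso_def by blast
    have bij: "bij_betw \<phi> (carrier (archipelago G Mod M)) (carrier integer_group)"
      using phi unfolding iso_def by blast
    have ph: "\<phi> \<in> hom (archipelago G Mod M) integer_group"
      using phi unfolding iso_def by blast
    obtain Y where Y: "Y \<in> carrier (archipelago G Mod M)" "\<phi> Y = 1"
    proof -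
      have "\<phi> ` carrier (archipelago G Mod M) = carrier integer_group" using bij by (rule bij_betw_imp_surj_on)
      then have "1 \<in> \<phi> ` carrier (archipelago G Mod M)" by (simp only: carrier_integer_group UNIV_I)
      then obtain y where "y \<in> carrier (archipelago G Mod M)" "1 = \<phi> y" by (rule imageE)
      then show ?thesis by (intro that) simp_all
    qed
    obtain Q where Q: "Q \<in> carrier (archipelago G)" "Y = M #>\<^bsub>archipelago G\<^esub> Q"
    proof -
      have "Y \<in> (\<Union>a\<in>carrier (archipelago G). {M #>\<^bsub>archipelago G\<^esub> a})"
        using Y(1) unfolding FactGroup_def RCOSETS_def by (simp only: partial_object.simps)
      then obtain a where "a \<in> carrier (archipelago G)" "Y = M #>\<^bsub>archipelago G\<^esub> a" by blast
      then show ?thesis by (rule that)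
    qed
    have hc: "\<phi> \<circ> (\<lambda>a. M #>\<^bsub>archipelago G\<^esub> a) \<in> hom (archipelago G) integer_group"
      by (rule hom_compose[OF normal.r_coset_hom_Mod[OF M(1)] ph])
    have "(\<phi> \<circ> (\<lambda>a. M #>\<^bsub>archipelago G\<^esub> a)) Q = 0" by (rule second[rule_format, OF hc Q(1)])
    then show False using Q(2) Y(2) by simp
  qed
qed


theorem proposition7:
  fixes G :: "nat \<Rightarrow> 'a monoid"
  assumes "\<And>n. group (G n)"
  shows "\<not> (\<exists>N. N \<lhd> archipelago G \<and> archipelago G Mod N \<cong> integer_group) \<and>
         (\<forall>h \<in> hom (archipelago G) integer_group. \<forall>x \<in> carrier (archipelago G). h x = 0)"
  by (rule main[OF assms])

end
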